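(* Let $$D=\{(t_1,\dots,t_n)\in\mathbb{R}^n_{>0}: t_1^2\leq t_2,\ t_j^2\leq t_{j-1}t_{j+1}\text{ for all } j=2,\dots,n-1\}$$ and let $f:\mathbb{R}^n_{>0}\to\mathbb{R}$ be $f(t_1,\dots,t_n)=\frac{1}{t_1}+\frac{t_1}{t_2}+\cdots+\frac{t_{n-1}}{t_n}$. Let $a=(a_1,\dots,a_n),b=(b_1,\dots,b_n)\in D$ with $a_i\leq b_i$ for all $i=1,\dots,n$. Then $f(a)\geq f(b)$, and equality holds if and only if $a=b$. *)

theory Defs
  imports Complex_Main
begin

text \<open>Points of R^n are represented as functions nat => real, using coordinates 1..n.\<close>

definition D :: "nat \<Rightarrow> (nat \<Rightarrow> real) set" where
  "D n = {t. (\<forall>i\<in>{1..n}. t i > 0) \<and> (t 1)^2 \<le> t 2 \<and>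
             (\<forall>j\<in>{2..n-1}. (t j)^2 \<le> t (j-1) * t (j+1))}"

definition f :: "nat \<Rightarrow> (nat \<Rightarrow> real) \<Rightarrow> real" where
  "f n t = 1 / t 1 + (\<Sum>i=2..n. t (i-1) / t i)"

end

theory Submission
  imports Defs
begin

lemma exp_strict: fixes x :: real assumes "x \<noteq> 0" shows "1 + x < exp x"
proof (cases "1 + x/2 \<ge> 0")
  case True
  have "exp x = exp (x/2)^2" by (simp add: power2_eq_square flip: exp_add)
  also have "\<dots> \<ge> (1 + x/2)^2"
    using True exp_ge_add_one_self[of "x/2"] by (intro power_mono) auto
  finally have "exp x \<ge> 1 + x + x^2/4" by (simp add: power2_eq_square field_simps)
  moreover have "x^2 > 0" using assms by simp
  ultimately show ?thesis by linarith
next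
  case False
  then have "1 + x < 0" by linarith
  then show ?thesis using exp_gt_zero[of x] by linarith
qed

lemma tangent: fixes d e :: real
  shows "exp (-d) \<ge> exp (-e) * (1 + (e - d))"
    and "d \<noteq> e \<Longrightarrow> exp (-d) > exp (-e) * (1 + (e - d))"
proof -
  have eq: "exp (-d) = exp (-e) * exp (e - d)" by (simp flip: exp_add)
  show "exp (-d) \<ge> exp (-e) * (1 + (e - d))"
    unfolding eq using exp_ge_add_one_self[of "e-d"] by (intro mult_left_mono) auto
  assume "d \<noteq> e"
  then show "exp (-d) > exp (-e) * (1 + (e - d))"
    unfolding eq using exp_strict[of "e-d"] by (intro mult_strict_left_mono) auto
qed

lemma abel_aux:
  fixes c S :: "nat \<Rightarrow> real"
  assumes "S 0 = 0" "\<forall>k\<le>n. S k \<ge> 0" "\<forall>k\<in>{1..<n}. c (k+1) \<le> c k"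
  shows "m \<le> n \<Longrightarrow> (\<Sum>j=1..m. c j * (S j - S (j-1))) \<ge> c m * S m"
proof (induction m)
  case 0 then show ?case using assms by simp
next
  case (Suc m)
  then have IH: "(\<Sum>j=1..m. c j * (S j - S (j-1))) \<ge> c m * S m" by simp
  have "(c m - c (Suc m)) * S m \<ge> 0"
  proof (cases "m = 0")
    case True then show ?thesis using assms by simp
  next
    case False then show ?thesis using assms Suc.prems by (intro mult_nonneg_nonneg) auto
  qed
  then show ?case using IH by (simp add: algebra_simps)
qed

lemma abel:
  fixes c S :: "nat \<Rightarrow> real"
  assumes "S 0 = 0" "\<forall>k\<le>n. S k \<ge> 0" "\<forall>k\<in>{1..<n}. c (k+1) \<le> c k" "\<forall>k\<in>{1..n}. c k \<ge> 0"
  shows "(\<Sum>j=1..n. c j * (S j - S (j-1))) \<ge> 0"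
proof -
  have "(\<Sum>j=1..n. c j * (S j - S (j-1))) \<ge> c n * S n"
    using abel_aux[OF assms(1-3)] by simp
  moreover have "c n * S n \<ge> 0"
    using assms by (cases "n = 0") (auto intro: mult_nonneg_nonneg)
  ultimately show ?thesis by linarith
qed

theorem proposition3p3:
  fixes n :: nat and a b :: "nat \<Rightarrow> real"
  assumes "n \<ge> 2"
    and "a \<in> D n" and "b \<in> D n"
    and "\<forall>i\<in>{1..n}. a i \<le> b i"
  shows "f n a \<ge> f n b \<and> (f n a = f n b \<longleftrightarrow> (\<forall>i\<in>{1..n}. a i = b i))"
proof -
  define A where "A j = (if j = 0 then 1 else a j)" for j
  define B where "B j = (if j = 0 then 1 else b j)" for j
  define x where "x j = ln (A j)" for j
  define y where "y j = ln (B j)" for j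
  define d where "d j = x j - x (j-1)" for j
  define e where "e j = y j - y (j-1)" for j
  define S where "S j = y j - x j" for j
  define c where "c j = exp (- e j)" for j
  have Apos: "A j > 0" if "j \<le> n" for j
    using assms(2) that unfolding A_def D_def by auto
  have Bpos: "B j > 0" if "j \<le> n" for j
    using assms(3) that unfolding B_def D_def by auto
  have fsum: "f n t = (\<Sum>j=1..n. (if j = 1 then 1 else t (j-1)) / t j)" for t
  proof -
    have "{1..n} = insert 1 {2..n}" using assms(1) by auto
    then have "(\<Sum>j=1..n. (if j = 1 then 1 else t (j-1)) / t j)
        = 1 / t 1 + (\<Sum>j=2..n. (if j = 1 then 1 else t (j-1)) / t j)" by simp
    also have "(\<Sum>j=2..n. (if j = 1 then 1 else t (j-1)) / t j) = (\<Sum>j=2..n. t (j-1) / t j)"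
      by (intro sum.cong) auto
    finally show ?thesis unfolding f_def by simp
  qed
  have fa: "f n a = (\<Sum>j=1..n. exp (- d j))"
    unfolding fsum
  proof (intro sum.cong refl)
    fix j assume j: "j \<in> {1..n}"
    have p1: "A j > 0" "A (j-1) > 0" using Apos[of j] Apos[of "j-1"] j by auto
    have "exp (- d j) = A (j-1) / A j"
      using p1 unfolding d_def x_def
      by (simp add: exp_diff)
    then show "(if j = 1 then 1 else a (j-1)) / a j = exp (- d j)"
      using j unfolding A_def by auto
  qed
  have fb: "f n b = (\<Sum>j=1..n. exp (- e j))"
    unfolding fsum
  proof (intro sum.cong refl)
    fix j assume j: "j \<in> {1..n}"
    have p1: "B j > 0" "B (j-1) > 0" using Bpos[of j] Bpos[of "j-1"] j by auto
    have "exp (- e j) = B (j-1) / B j"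
      using p1 unfolding e_def y_def
      by (simp add: exp_diff)
    then show "(if j = 1 then 1 else b (j-1)) / b j = exp (- e j)"
      using j unfolding B_def by auto
  qed
  have convB: "(B k)^2 \<le> B (k-1) * B (k+1)" if "k \<in> {1..<n}" for k
  proof (cases "k = 1")
    case True then show ?thesis using assms(3) unfolding D_def B_def by (auto simp: numeral_2_eq_2)
  next
    case False then show ?thesis using assms(3) that unfolding D_def B_def by auto
  qed
  have emono: "e (k+1) \<ge> e k" if k: "k \<in> {1..<n}" for k
  proof -
    have p: "B k > 0" "B (k-1) > 0" "B (k+1) > 0" using Bpos[of k] Bpos[of "k-1"] Bpos[of "k+1"] k by auto
    have "ln ((B k)^2) \<le> ln (B (k-1) * B (k+1))"
      using convB[OF k] Bpos[of k] Bpos[of "k-1"] Bpos[of "k+1"] k by auto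
    then have "2 * y k \<le> y (k-1) + y (k+1)"
      using p unfolding y_def
      by (simp add: ln_mult ln_realpow)
    then show ?thesis unfolding e_def by simp
  qed
  have cmono: "\<forall>k\<in>{1..<n}. c (k+1) \<le> c k" using emono unfolding c_def by auto
  have Snn: "\<forall>k\<le>n. S k \<ge> 0"
  proof (intro allI impI)
    fix k assume k: "k \<le> n"
    show "S k \<ge> 0"
    proof (cases "k = 0")
      case True then show ?thesis unfolding S_def x_def y_def A_def B_def by simp
    next
      case False
      then have "A k \<le> B k" using assms(4) k unfolding A_def B_def by auto
      then show ?thesis unfolding S_def x_def y_def using Apos[OF k] by simp
    qed
  qed
  have S0: "S 0 = 0" unfolding S_def x_def y_def A_def B_def by simp
  have ab: "(\<Sum>j=1..n. c j * (S j - S (j-1))) \<ge> 0"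
    by (rule abel[OF S0 Snn cmono]) (auto simp: c_def)
  have eSd: "S j - S (j-1) = e j - d j" for j unfolding S_def e_def d_def by simp
  define g where "g j = exp (- d j) - exp (- e j) * (1 + (e j - d j))" for j
  have gnn: "g j \<ge> 0" for j using tangent(1)[of "e j" "d j"] unfolding g_def by simp
  have split: "f n a - f n b = (\<Sum>j=1..n. g j) + (\<Sum>j=1..n. c j * (S j - S (j-1)))"
    unfolding fa fb g_def c_def eSd
    by (simp add: sum_subtractf[symmetric] sum.distrib[symmetric] algebra_simps)
  have sg: "(\<Sum>j=1..n. g j) \<ge> 0" by (intro sum_nonneg) (use gnn in auto)
  have ge: "f n a \<ge> f n b" using split ab sg by linarith
  have iff: "f n a = f n b \<longleftrightarrow> (\<forall>i\<in>{1..n}. a i = b i)"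
  proof
    assume eq: "f n a = f n b"
    then have "(\<Sum>j=1..n. g j) = 0" using split ab sg by linarith
    then have g0: "\<forall>j\<in>{1..n}. g j = 0" using gnn by (subst (asm) sum_nonneg_eq_0_iff) auto
    have de: "d j = e j" if "j \<in> {1..n}" for j
    proof (rule ccontr)
      assume "d j \<noteq> e j"
      then have "g j > 0" using tangent(2)[of "d j" "e j"] unfolding g_def by simp
      then show False using g0 that by auto
    qed
    have xy: "k \<le> n \<Longrightarrow> x k = y k" for k
    proof (induction k)
      case 0 then show ?case unfolding x_def y_def A_def B_def by simp
    next
      case (Suc k)
      then have "d (Suc k) = e (Suc k)" using de by auto
      then show ?case using Suc unfolding d_def e_def by simp
    qed
    show "\<forall>i\<in>{1..n}. a i = b i"
    proof
      fix i assume i: "i \<in> {1..n}"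
      then have "ln (A i) = ln (B i)" using xy[of i] unfolding x_def y_def by auto
      then have "A i = B i" using Apos[of i] Bpos[of i] i by auto
      then show "a i = b i" using i unfolding A_def B_def by auto
    qed
  next
    assume eq: "\<forall>i\<in>{1..n}. a i = b i"
    show "f n a = f n b" unfolding fsum
    proof (intro sum.cong refl)
      fix j assume j: "j \<in> {1..n}"
      have "a j = b j" using eq j by blast
      moreover have "j \<noteq> 1 \<Longrightarrow> a (j-1) = b (j-1)"
      proof -
        assume "j \<noteq> 1"
        then have "j - 1 \<in> {1..n}" using j by auto
        then show ?thesis using eq by blast
      qed
      ultimately show "(if j = 1 then 1 else a (j-1)) / a j = (if j = 1 then 1 else b (j-1)) / b j"
        by auto
    qed
  qed
  show ?thesis using ge iff by blast
qed

end
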